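(* Let $\Delta$ be a root system in a Euclidean space $\mathfrak h^*$ and let $\Delta^0\subset\Delta$ be a root subsystem. Then for every $\alpha\in\Delta$: if there exists $\beta\in\Delta\setminus\Delta^0$ with $(\alpha,\beta)\neq0$, then $\alpha\in\mathrm{span}(\Delta\setminus\Delta^0)$. In particular, if $\Delta$ is irreducible and $\Delta^0$ is a proper subsystem, then $\mathrm{span}(\Delta\setminus\Delta^0)=\mathfrak h^*$.
   Context: A root subsystem of $\Delta$ is a subset $\Delta^0\subset\Delta$ which is itself a root system (in its span). Here $\Delta$ spans $\mathfrak h^*$. *)

theory Defs
  imports "HOL-Analysis.Analysis"
begin

definition refl :: "'a::euclidean_space \<Rightarrow> 'a \<Rightarrow> 'a" where
  "refl a b = b - (2 * (b \<bullet> a) / (a \<bullet> a)) *\<^sub>R a"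

text \<open>A (not necessarily reduced) crystallographic root system in its own span:
  finite, not containing 0, stable under the reflections, with integral Cartan numbers.\<close>
definition root_system_in_span :: "'a::euclidean_space set \<Rightarrow> bool" where
  "root_system_in_span R \<longleftrightarrow>
     finite R \<and> 0 \<notin> R \<and>
     (\<forall>a\<in>R. \<forall>b\<in>R. refl a b \<in> R) \<and>
     (\<forall>a\<in>R. \<forall>b\<in>R. 2 * (b \<bullet> a) / (a \<bullet> a) \<in> \<int>)"

definition root_system :: "'a::euclidean_space set \<Rightarrow> bool" where
  "root_system R \<longleftrightarrow> root_system_in_span R \<and> span R = UNIV"

definition root_subsystem :: "'a::euclidean_space set \<Rightarrow> 'a set \<Rightarrow> bool" where
  "root_subsystem R0 R \<longleftrightarrow> R0 \<subseteq> R \<and> root_system_in_span R0"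

definition irreducible_rs :: "'a::euclidean_space set \<Rightarrow> bool" where
  "irreducible_rs R \<longleftrightarrow> R \<noteq> {} \<and>
     \<not> (\<exists>A B. A \<noteq> {} \<and> B \<noteq> {} \<and> A \<union> B = R \<and> A \<inter> B = {} \<and>
              (\<forall>a\<in>A. \<forall>b\<in>B. a \<bullet> b = 0))"

end

theory Submission
  imports Defs
begin

lemma refl_refl:
  fixes a b :: "'a::euclidean_space"
  assumes "a \<noteq> 0"
  shows "refl a (refl a b) = b"
proof -
  have aa: "a \<bullet> a \<noteq> 0" using assms by simp
  have "refl a b \<bullet> a = - (b \<bullet> a)"
    using aa by (simp add: refl_def inner_diff_left field_simps)
  then show ?thesis using aa
    by (simp add: refl_def algebra_simps divide_simps)
qed

lemma part1:
  fixes \<Delta> \<Delta>0 :: "'a::euclidean_space set"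
  assumes "root_system \<Delta>" and "root_subsystem \<Delta>0 \<Delta>"
    and \<alpha>: "\<alpha> \<in> \<Delta>" and \<beta>: "\<beta> \<in> \<Delta> - \<Delta>0" and ne: "\<alpha> \<bullet> \<beta> \<noteq> 0"
  shows "\<alpha> \<in> span (\<Delta> - \<Delta>0)"
proof (cases "\<alpha> \<in> \<Delta>0")
  case False
  then show ?thesis using \<alpha> by (simp add: span_base)
next
  case True
  have R: "finite \<Delta>" "0 \<notin> \<Delta>" "\<forall>a\<in>\<Delta>. \<forall>b\<in>\<Delta>. refl a b \<in> \<Delta>"
    using assms(1) unfolding root_system_def root_system_in_span_def by auto
  have R0: "\<Delta>0 \<subseteq> \<Delta>" "\<forall>a\<in>\<Delta>0. \<forall>b\<in>\<Delta>0. refl a b \<in> \<Delta>0"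
    using assms(2) unfolding root_subsystem_def root_system_in_span_def by auto
  have a0: "\<alpha> \<noteq> 0" using R \<alpha> by auto
  define c where "c = 2 * (\<beta> \<bullet> \<alpha>) / (\<alpha> \<bullet> \<alpha>)"
  have c0: "c \<noteq> 0" using ne a0 by (simp add: c_def inner_commute)
  have rin: "refl \<alpha> \<beta> \<in> \<Delta>" using R \<alpha> \<beta> by auto
  have rnot: "refl \<alpha> \<beta> \<notin> \<Delta>0"
  proof
    assume "refl \<alpha> \<beta> \<in> \<Delta>0"
    then have "refl \<alpha> (refl \<alpha> \<beta>) \<in> \<Delta>0" using R0 True by auto
    then show False using refl_refl[OF a0] \<beta> by simp
  qed
  have eq: "\<alpha> = (1 / c) *\<^sub>R (\<beta> - refl \<alpha> \<beta>)"
    using c0 by (simp add: refl_def c_def[symmetric])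
  have "\<beta> - refl \<alpha> \<beta> \<in> span (\<Delta> - \<Delta>0)"
    using \<beta> rin rnot by (intro span_diff span_base) auto
  then show ?thesis by (subst eq) (rule span_mul)
qed

theorem lemma3p4:
  fixes \<Delta> \<Delta>0 :: "'a::euclidean_space set"
  assumes "root_system \<Delta>" and "root_subsystem \<Delta>0 \<Delta>"
  shows "(\<forall>\<alpha>\<in>\<Delta>. (\<exists>\<beta>\<in>\<Delta> - \<Delta>0. \<alpha> \<bullet> \<beta> \<noteq> 0) \<longrightarrow> \<alpha> \<in> span (\<Delta> - \<Delta>0))
     \<and> ((irreducible_rs \<Delta> \<and> \<Delta>0 \<subset> \<Delta>) \<longrightarrow> span (\<Delta> - \<Delta>0) = UNIV)"
proof (intro conjI impI ballI)
  fix \<alpha> assume "\<alpha> \<in> \<Delta>" "\<exists>\<beta>\<in>\<Delta> - \<Delta>0. \<alpha> \<bullet> \<beta> \<noteq> 0"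
  then show "\<alpha> \<in> span (\<Delta> - \<Delta>0)" using part1[OF assms] by blast
next
  assume h: "irreducible_rs \<Delta> \<and> \<Delta>0 \<subset> \<Delta>"
  define S where "S = span (\<Delta> - \<Delta>0)"
  define A where "A = \<Delta> \<inter> S"
  define B where "B = \<Delta> - S"
  have "A \<noteq> {}" using h by (auto simp: A_def S_def intro: span_base)
  moreover have orth: "\<forall>a\<in>A. \<forall>b\<in>B. a \<bullet> b = 0"
  proof (intro ballI)
    fix a b assume a: "a \<in> A" and b: "b \<in> B"
    have "\<forall>y\<in>\<Delta> - \<Delta>0. b \<bullet> y = 0"
      using part1[OF assms, of b] b by (auto simp: B_def S_def)
    then have "orthogonal b a"
      using a by (intro orthogonal_to_span[of a "\<Delta> - \<Delta>0"]) (auto simp: A_def S_def orthogonal_def)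
    then show "a \<bullet> b = 0" by (simp add: orthogonal_def inner_commute)
  qed
  ultimately have "B = {}" using h unfolding irreducible_rs_def
    by (metis A_def B_def Int_Diff_disjoint Int_Diff_Un)
  then have "\<Delta> \<subseteq> S" by (auto simp: B_def)
  then have "span \<Delta> \<subseteq> S" by (simp add: S_def span_minimal)
  then show "span (\<Delta> - \<Delta>0) = UNIV" using assms(1) by (auto simp: root_system_def S_def)
qed

end
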